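(* Let $K$ be a field, $N\ge 2$, $N_1,\dots,N_N\ge 1$, and for $1\le i\le N$, $1\le j\le N_i$ let $L_{i,j}=a_ix+b_iy+c_{i,j}\in K[x,y]$ be non-constant polynomials such that the lines $L_{i,j}=0$ in the affine plane are pairwise distinct, and lines with different first index are not parallel. Then for every $\lambda\in K^*$ the polynomial $$f(x,y)=\lambda\prod_{i=1}^N\prod_{j=1}^{N_i}L_{i,j}-1$$ is irreducible in $K[x,y]$; in particular the affine curve $f(x,y)=0$ is irreducible.
   Context: Note that all lines with the same first index $i$ are parallel (they share the coefficients $a_i,b_i$); "not parallel for distinct $i$" means $a_ib_k-a_kb_i\neq 0$ for $i\neq k$. *)

theory Defs
  imports "HOL-Computational_Algebra.Polynomial"
begin

text \<open>Bivariate polynomials K[x,y] are represented as K[y][x], i.e. the type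
  ('a poly) poly: the outer variable is x, the inner (coefficient) variable is y.
  This ring is isomorphic to K[x,y], so irreducibility is the same notion.\<close>

definition bivar_const :: "'a::zero \<Rightarrow> 'a poly poly" where
  "bivar_const c = [:[:c:]:]"

definition line_poly :: "'a::comm_ring_1 \<Rightarrow> 'a \<Rightarrow> 'a \<Rightarrow> 'a poly poly" where
  "line_poly a b c = [:[:c, b:], [:a:]:]"

end

theory Submission imports Defs begin

lemma map_poly_eval_mult:
  "map_poly (\<lambda>q. poly q y) (p * r) = map_poly (\<lambda>q. poly q y) p * map_poly (\<lambda>q. poly q y) r"
  by (rule poly_eqI) (simp add: coeff_map_poly coeff_mult poly_sum)

lemma map_poly_eval_add:
  "map_poly (\<lambda>q. poly q y) (p + r) = map_poly (\<lambda>q. poly q y) p + map_poly (\<lambda>q. poly q y) r"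
  by (rule poly_eqI) (simp add: coeff_map_poly)

lemma map_poly_eval_diff:
  fixes y :: "'a::comm_ring"
  shows "map_poly (\<lambda>q. poly q y) (p - r) = map_poly (\<lambda>q. poly q y) p - map_poly (\<lambda>q. poly q y) r"
  by (rule poly_eqI) (simp add: coeff_map_poly poly_diff)

definition rho :: "'a::field \<Rightarrow> 'a \<Rightarrow> 'a \<Rightarrow> 'a poly poly \<Rightarrow> 'a poly" where
  "rho a b c p = (if a \<noteq> 0 then poly p [:-c/a, -b/a:] else map_poly (\<lambda>q. poly q (-c/b)) p)"

lemma rho_mult: "rho a b c (p * q) = rho a b c p * rho a b c q"
  by (simp add: rho_def map_poly_eval_mult)
lemma rho_add: "rho a b c (p + q) = rho a b c p + rho a b c q"
  by (simp add: rho_def map_poly_eval_add)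
lemma rho_diff: "rho a b c (p - q) = rho a b c p - rho a b c q"
  by (simp add: rho_def map_poly_eval_diff)
lemma rho_1: "rho a b c 1 = 1"
  by (simp add: rho_def)
lemma rho_const: "rho a b c (bivar_const t) = [:t:]"
  by (simp add: rho_def bivar_const_def map_poly_pCons)
lemma rho_prod: "rho a b c (prod f A) = (\<Prod>x\<in>A. rho a b c (f x))"
  by (induction A rule: infinite_finite_induct) (auto simp: rho_1 rho_mult)

lemma rho_self: "a \<noteq> 0 \<or> b \<noteq> 0 \<Longrightarrow> rho a b c (line_poly a b c) = 0"
  by (auto simp: rho_def line_poly_def field_simps map_poly_pCons)

lemma rho_zero_dvd:
  assumes ab: "a \<noteq> 0 \<or> b \<noteq> 0" and z: "rho a b c p = 0"
  shows "line_poly a b c dvd p"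
proof (cases "a = 0")
  case False
  define r where "r = [:-c/a, -b/a:]"
  have "poly p r = 0" using z False by (simp add: rho_def r_def)
  hence d1: "[:-r, 1:] dvd p" by (simp add: poly_eq_0_iff_dvd)
  have "[:-r, 1:] = line_poly a b c * [:[:1/a:]:]"
    using False by (simp add: line_poly_def r_def field_simps)
  hence "line_poly a b c dvd [:-r, 1:]" by (metis dvd_triv_left)
  thus ?thesis using d1 by (rule dvd_trans)
next
  case True
  hence b: "b \<noteq> 0" using ab by simp
  define y0 where "y0 = -c/b"
  have L: "line_poly a b c = [:[:c,b:]:]" using True by (simp add: line_poly_def)
  have cz: "poly (coeff p n) y0 = 0" for n
  proof -
    have "map_poly (\<lambda>q. poly q y0) p = 0" using z True by (simp add: rho_def y0_def)
    hence "coeff (map_poly (\<lambda>q. poly q y0) p) n = 0" by simp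
    thus ?thesis by (simp add: coeff_map_poly)
  qed
  have dv: "[:c,b:] dvd coeff p n" for n
  proof -
    have "[:-y0, 1:] dvd coeff p n" using cz by (simp add: poly_eq_0_iff_dvd)
    moreover have "[:-y0, 1:] = [:c,b:] * [:1/b:]" using b by (simp add: y0_def field_simps)
    ultimately show ?thesis by (metis dvd_mult_left)
  qed
  have dv2: "coeff p n = [:c,b:] * (coeff p n div [:c,b:])" for n
    using dv[of n] by (simp only: dvd_mult_div_cancel)
  have "p = smult [:c,b:] (map_poly (\<lambda>q. q div [:c,b:]) p)"
    by (rule poly_eqI) (metis coeff_map_poly coeff_smult div_0 dv2)
  also have "\<dots> = [:[:c,b:]:] * map_poly (\<lambda>q. q div [:c,b:]) p" by simp
  finally show ?thesis unfolding L by (metis dvd_triv_left)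
qed

definition ev :: "'a::field \<Rightarrow> 'a \<Rightarrow> 'a poly poly \<Rightarrow> 'a" where
  "ev x y p = poly (poly p [:x:]) y"

lemma ev_mult: "ev x y (p * q) = ev x y p * ev x y q" by (simp add: ev_def)
lemma ev_diff: "ev x y (p - q) = ev x y p - ev x y q" by (simp add: ev_def)
lemma ev_1: "ev x y 1 = 1" by (simp add: ev_def)
lemma ev_const: "ev x y (bivar_const t) = t" by (simp add: ev_def bivar_const_def)
lemma ev_line: "ev x y (line_poly a b c) = a*x + b*y + c" by (simp add: ev_def line_poly_def algebra_simps)

lemma aux_div: "(D::'a::field) \<noteq> 0 \<Longrightarrow> a*(u/D) + b*(v/D) + c = (a*u+b*v+c*D)/D"
  by (simp add: field_simps)

lemma intersect:
  assumes "a*b' - a'*b \<noteq> (0::'a::field)"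
  shows "\<exists>x y. a*x + b*y + c = 0 \<and> a'*x + b'*y + c' = 0"
proof (intro exI conjI)
  let ?D = "a*b' - a'*b"
  have e1: "a*((b*c' - b'*c)/?D) + b*((a'*c - a*c')/?D) + c = (a*(b*c' - b'*c) + b*(a'*c - a*c') + c*?D)/?D"
    using assms by (rule aux_div)
  have "a*(b*c' - b'*c) + b*(a'*c - a*c') + c*?D = 0" by (simp add: algebra_simps)
  thus "a*((b*c' - b'*c)/?D) + b*((a'*c - a*c')/?D) + c = 0" using e1 by simp
  have e2: "a'*((b*c' - b'*c)/?D) + b'*((a'*c - a*c')/?D) + c' = (a'*(b*c' - b'*c) + b'*(a'*c - a*c') + c'*?D)/?D"
    using assms by (rule aux_div)
  have "a'*(b*c' - b'*c) + b'*(a'*c - a*c') + c'*?D = 0" by (simp add: algebra_simps)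
  thus "a'*((b*c' - b'*c)/?D) + b'*((a'*c - a*c')/?D) + c' = 0" using e2 by simp
qed

lemma rho_other:
  assumes "a \<noteq> 0 \<or> b \<noteq> 0"
    and "(a' = a \<and> b' = b \<and> c' \<noteq> c) \<or> a*b' - a'*b \<noteq> 0"
  shows "rho a b c (line_poly a' b' c') \<noteq> 0"
  using assms
  apply (auto simp: rho_def line_poly_def field_simps map_poly_pCons)
  done

lemma rho_dvd_zero: "a \<noteq> 0 \<or> b \<noteq> 0 \<Longrightarrow> line_poly a b c dvd p \<Longrightarrow> rho a b c p = 0"
  by (auto elim!: dvdE simp: rho_mult rho_self)

lemma ev_dvd_zero: "ev x y L = 0 \<Longrightarrow> L dvd p \<Longrightarrow> ev x y p = 0"
  by (auto elim!: dvdE simp: ev_mult)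

lemma const_on_line:
  fixes a b c :: "'a::field"
  assumes ab: "a \<noteq> 0 \<or> b \<noteq> 0" and d: "line_poly a b c dvd g * h + 1"
  shows "\<exists>t. line_poly a b c dvd g - bivar_const t"
proof -
  have "rho a b c (g*h + 1) = 0" using rho_dvd_zero[OF ab d] .
  hence "rho a b c g * rho a b c h + 1 = 0" by (simp add: rho_add rho_mult rho_1)
  hence "rho a b c g * (- rho a b c h) = 1" by (metis add.commute add_eq_0_iff mult_minus_right)
  hence "is_unit (rho a b c g)" by (metis dvdI)
  then obtain t where t: "rho a b c g = [:t:]" using is_unit_poly_iff by blast
  have "rho a b c (g - bivar_const t) = 0" by (simp add: rho_diff rho_const t)
  thus ?thesis using rho_zero_dvd[OF ab] by blast
qed

lemma prod_lines_dvd: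
  fixes A B :: "'b \<Rightarrow> 'a::field" and C :: "'b \<Rightarrow> 'a"
  assumes "finite S"
  shows "(\<forall>s\<in>S. A s \<noteq> 0 \<or> B s \<noteq> 0) \<longrightarrow>
    (\<forall>s\<in>S. \<forall>t\<in>S. s \<noteq> t \<longrightarrow> ((A t = A s \<and> B t = B s \<and> C t \<noteq> C s) \<or> A s * B t - A t * B s \<noteq> 0)) \<longrightarrow>
    (\<forall>s\<in>S. line_poly (A s) (B s) (C s) dvd p) \<longrightarrow>
    (\<Prod>s\<in>S. line_poly (A s) (B s) (C s)) dvd p"
  using assms
proof (induction S rule: finite_induct)
  case empty
  then show ?case by simp
next
  case (insert x F)
  show ?case
  proof (intro impI)
    assume h1: "\<forall>s\<in>insert x F. A s \<noteq> 0 \<or> B s \<noteq> 0"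
      and h2: "\<forall>s\<in>insert x F. \<forall>t\<in>insert x F. s \<noteq> t \<longrightarrow> ((A t = A s \<and> B t = B s \<and> C t \<noteq> C s) \<or> A s * B t - A t * B s \<noteq> 0)"
      and h3: "\<forall>s\<in>insert x F. line_poly (A s) (B s) (C s) dvd p"
    have "(\<Prod>s\<in>F. line_poly (A s) (B s) (C s)) dvd p" using insert.IH h1 h2 h3 by auto
    then obtain q where q: "p = (\<Prod>s\<in>F. line_poly (A s) (B s) (C s)) * q" by (erule dvdE)
    have abx: "A x \<noteq> 0 \<or> B x \<noteq> 0" using h1 by auto
    have r0: "rho (A x) (B x) (C x) p = 0" using rho_dvd_zero[OF abx] h3 by auto
    have "rho (A x) (B x) (C x) (\<Prod>s\<in>F. line_poly (A s) (B s) (C s)) =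
          (\<Prod>s\<in>F. rho (A x) (B x) (C x) (line_poly (A s) (B s) (C s)))" by (rule rho_prod)
    also have "\<dots> \<noteq> 0"
    proof -
      have "rho (A x) (B x) (C x) (line_poly (A s) (B s) (C s)) \<noteq> 0" if "s \<in> F" for s
      proof -
        have "x \<noteq> s" using that insert.hyps by auto
        hence "(A s = A x \<and> B s = B x \<and> C s \<noteq> C x) \<or> A x * B s - A s * B x \<noteq> 0"
          using h2 that by auto
        thus ?thesis using rho_other[OF abx] by blast
      qed
      thus ?thesis using insert.hyps by (simp add: prod_zero_iff)
    qed
    finally have "rho (A x) (B x) (C x) q = 0" using r0 q by (simp add: rho_mult)
    hence "line_poly (A x) (B x) (C x) dvd q" by (rule rho_zero_dvd[OF abx])
    thus "(\<Prod>s\<in>insert x F. line_poly (A s) (B s) (C s)) dvd p"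
      using insert.hyps q by (simp add: mult_dvd_mono mult.commute)
  qed
qed

lemma bc_mult: "bivar_const (x * y) = bivar_const x * (bivar_const y :: 'a::comm_ring_1 poly poly)"
  by (simp add: bivar_const_def)
lemma bc_one: "bivar_const 1 = (1 :: 'a::comm_ring_1 poly poly)"
  by (simp add: bivar_const_def pCons_one)
lemma bc_neg: "bivar_const (-x) = - (bivar_const x :: 'a::comm_ring_1 poly poly)"
  by (simp add: bivar_const_def)
lemma bc_degree: "degree (bivar_const x * p) \<le> degree (p :: 'a::comm_ring_1 poly poly)"
  by (simp add: bivar_const_def degree_smult_le)

theorem lemma2p1:
  fixes a b :: "nat \<Rightarrow> 'a::field" and c :: "nat \<Rightarrow> nat \<Rightarrow> 'a"
    and N :: nat and Ns :: "nat \<Rightarrow> nat" and lam :: 'a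
  assumes "N \<ge> 2"
    and "\<forall>i\<in>{1..N}. Ns i \<ge> 1"
    and "\<forall>i\<in>{1..N}. a i \<noteq> 0 \<or> b i \<noteq> 0"
    and "\<forall>i\<in>{1..N}. \<forall>j\<in>{1..Ns i}. \<forall>j'\<in>{1..Ns i}. j \<noteq> j' \<longrightarrow> c i j \<noteq> c i j'"
    and "\<forall>i\<in>{1..N}. \<forall>k\<in>{1..N}. i \<noteq> k \<longrightarrow> a i * b k - a k * b i \<noteq> 0"
    and "lam \<noteq> 0"
  shows "irreducible
           (bivar_const lam * (\<Prod>i\<in>{1..N}. \<Prod>j\<in>{1..Ns i}. line_poly (a i) (b i) (c i j)) - 1)"
proof -
  note N2 = assms(1) and Ns1 = assms(2) and ab = assms(3) and cdist = assms(4)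
    and det = assms(5) and lam = assms(6)
  define S where "S = Sigma {1..N} (\<lambda>i. {1..Ns i})"
  define A where "A = (\<lambda>s::nat\<times>nat. a (fst s))"
  define B where "B = (\<lambda>s::nat\<times>nat. b (fst s))"
  define C where "C = (\<lambda>s::nat\<times>nat. c (fst s) (snd s))"
  define L where "L = (\<lambda>s. line_poly (A s) (B s) (C s))"
  define P where "P = (\<Prod>s\<in>S. L s)"
  have P_eq: "(\<Prod>i\<in>{1..N}. \<Prod>j\<in>{1..Ns i}. line_poly (a i) (b i) (c i j)) = P"
    unfolding P_def S_def L_def A_def B_def C_def by (simp add: prod.Sigma split_def)
  define f where "f = bivar_const lam * P - 1"
  have finS: "finite S" unfolding S_def by simp
  have abS: "\<forall>s\<in>S. A s \<noteq> 0 \<or> B s \<noteq> 0" using ab by (auto simp: S_def A_def B_def)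
  have distS: "\<forall>s\<in>S. \<forall>t\<in>S. s \<noteq> t \<longrightarrow> ((A t = A s \<and> B t = B s \<and> C t \<noteq> C s) \<or> A s * B t - A t * B s \<noteq> 0)"
  proof (intro ballI impI)
    fix s t assume s: "s \<in> S" and t: "t \<in> S" and st: "s \<noteq> t"
    obtain i j k l where ij: "s = (i,j)" and kl: "t = (k,l)" by (cases s, cases t) auto
    show "(A t = A s \<and> B t = B s \<and> C t \<noteq> C s) \<or> A s * B t - A t * B s \<noteq> 0"
    proof (cases "i = k")
      case True
      then have "j \<noteq> l" using st ij kl by auto
      then show ?thesis using True cdist s t ij kl by (auto simp: S_def A_def B_def C_def)
    next
      case False
      then show ?thesis using det s t ij kl by (auto simp: S_def A_def B_def C_def)
    qed
  qed
  have Lnz: "L s \<noteq> 0" if "s \<in> S" for s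
    using abS that by (auto simp: L_def line_poly_def)
  have Pnz: "P \<noteq> 0" using Lnz finS by (simp add: P_def prod_zero_iff)
  have Ldvd: "L s dvd P" if "s \<in> S" for s
    using finS that unfolding P_def by (rule dvd_prodI)
  have s0: "(1,1) \<in> S" and s1: "(2,1) \<in> S" using N2 Ns1 by (auto simp: S_def)
  have det01: "A (1,1) * B (2,1) - A (2,1) * B (1,1) \<noteq> 0"
    using det N2 by (auto simp: A_def B_def)
  obtain s2 where s2: "s2 \<in> S" "A s2 \<noteq> 0"
    using s0 s1 det01 by (metis mult_zero_left diff_self)
  have degP: "degree P \<ge> 1"
  proof -
    have "P = L s2 * (\<Prod>s\<in>S - {s2}. L s)"
      unfolding P_def using finS s2(1) by (rule prod.remove)
    moreover have "(\<Prod>s\<in>S - {s2}. L s) \<noteq> 0" using Lnz finS by (simp add: prod_zero_iff)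
    moreover have "degree (L s2) = 1" using s2(2) by (simp add: L_def line_poly_def)
    ultimately show ?thesis using Lnz[OF s2(1)] by (simp add: degree_mult_eq)
  qed
  have degf: "degree f = degree P"
  proof -
    have "degree (bivar_const lam * P) = degree P" using lam by (simp add: bivar_const_def)
    moreover have "f = bivar_const lam * P + (- 1)" by (simp add: f_def)
    moreover have "degree (bivar_const lam * P + (- 1)) = degree (bivar_const lam * P)"
      by (rule degree_add_eq_left) (use degP \<open>degree (bivar_const lam * P) = degree P\<close> in simp)
    ultimately show ?thesis by simp
  qed
  have fnz: "f \<noteq> 0" using degf degP by auto
  have fnu: "\<not> is_unit f"
  proof
    assume "is_unit f"
    then obtain k where "f = [:k:]" using is_unit_poly_iff by blast
    hence "degree f = 0" by simp
    thus False using degf degP by simp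
  qed
  have f1: "L s dvd g * h + 1" if "s \<in> S" "f = g * h" for s g h
  proof -
    have "g * h + 1 = P * bivar_const lam" using that(2) unfolding f_def by (metis diff_add_cancel mult.commute)
    thus ?thesis using Ldvd[OF that(1)] by simp
  qed
  have pt: "\<exists>x y. ev x y (L s) = 0 \<and> ev x y (L t) = 0"
    if "s \<in> S" "t \<in> S" "fst s \<noteq> fst t" for s t
  proof -
    have "A s * B t - A t * B s \<noteq> 0" using det that by (auto simp: S_def A_def B_def)
    from intersect[OF this, of "C s" "C t"] show ?thesis by (simp add: L_def ev_line)
  qed
  have gen: "\<exists>\<alpha>. \<forall>s\<in>S. L s dvd g - bivar_const \<alpha>" if fgh: "f = g * h" for g h
  proof -
    have "\<forall>s\<in>S. \<exists>t. L s dvd g - bivar_const t"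
      using const_on_line abS f1[OF _ fgh] unfolding L_def by blast
    then obtain al where al: "\<forall>s\<in>S. L s dvd g - bivar_const (al s)" by metis
    have val: "ev x y g = al s" if "s \<in> S" "ev x y (L s) = 0" for s x y
    proof -
      have "ev x y (g - bivar_const (al s)) = 0" using ev_dvd_zero that al by blast
      thus ?thesis by (simp add: ev_diff ev_const)
    qed
    have eq: "al s = al t" if "s \<in> S" "t \<in> S" "fst s \<noteq> fst t" for s t
      using pt[OF that] val that by metis
    have "\<forall>s\<in>S. al s = al (1,1)"
    proof
      fix s assume sS: "s \<in> S"
      show "al s = al (1,1)"
      proof (cases "fst s = 1")
        case True
        then show ?thesis using eq[OF sS s1] eq[OF s1 s0] by simp
      next
        case False
        then show ?thesis using eq[OF sS s0] by simp
      qed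
    qed
    thus ?thesis using al by metis
  qed
  show ?thesis
    unfolding P_eq f_def[symmetric]
  proof (rule irreducibleI)
    show "f \<noteq> 0" by (rule fnz)
    show "\<not> is_unit f" by (rule fnu)
    fix g h assume fgh: "f = g * h"
    obtain al where al: "\<forall>s\<in>S. L s dvd g - bivar_const al" using gen[OF fgh] by blast
    obtain be where be: "\<forall>s\<in>S. L s dvd h - bivar_const be" using gen[of h g] fgh by (auto simp: mult.commute)
    have "P dvd g - bivar_const al"
      using prod_lines_dvd[OF finS, of A B C "g - bivar_const al"] abS distS al unfolding P_def L_def by blast
    then obtain u where u: "g = bivar_const al + P * u" by (metis dvdE diff_eq_eq add.commute)
    have "P dvd h - bivar_const be"
      using prod_lines_dvd[OF finS, of A B C "h - bivar_const be"] abS distS be unfolding P_def L_def by blast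
    then obtain v where v: "h = bivar_const be + P * v" by (metis dvdE diff_eq_eq add.commute)
    have albe: "al * be = -1"
    proof -
      obtain x y where xy: "ev x y (L (1,1)) = 0" using pt[OF s0 s1] by auto
      have "ev x y (g - bivar_const al) = 0" using ev_dvd_zero[OF xy] al s0 by blast
      hence eg: "ev x y g = al" by (simp add: ev_diff ev_const)
      have "ev x y (h - bivar_const be) = 0" using ev_dvd_zero[OF xy] be s0 by blast
      hence eh: "ev x y h = be" by (simp add: ev_diff ev_const)
      have "ev x y P = 0" using ev_dvd_zero[OF xy] Ldvd[OF s0] by blast
      hence "ev x y f = -1" by (simp add: f_def ev_diff ev_mult ev_1)
      thus ?thesis using fgh eg eh by (simp add: ev_mult)
    qed
    have "P * bivar_const lam - 1 = (bivar_const al + P * u) * (bivar_const be + P * v)"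
      using fgh u v by (simp add: f_def mult.commute)
    also have "\<dots> = bivar_const (al * be) + P * (bivar_const al * v + bivar_const be * u + P * u * v)"
      by (simp add: bc_mult algebra_simps)
    also have "bivar_const (al * be) = - 1" by (simp add: albe bc_neg bc_one)
    finally have "P * bivar_const lam = P * (bivar_const al * v + bivar_const be * u + P * u * v)"
      by (simp add: algebra_simps)
    hence key: "bivar_const lam = bivar_const al * v + bivar_const be * u + P * u * v"
      using Pnz by simp
    have "u = 0 \<or> v = 0"
    proof (rule ccontr)
      assume "\<not> (u = 0 \<or> v = 0)"
      hence nz: "u \<noteq> 0" "v \<noteq> 0" by auto
      have d1: "degree (P * u * v) = degree P + degree u + degree v"
        using nz Pnz by (simp add: degree_mult_eq)
      have "degree (bivar_const al * v + bivar_const be * u) \<le> max (degree v) (degree u)"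
        by (meson bc_degree degree_add_le le_max_iff_disj order_trans)
      also have "\<dots> < degree (P * u * v)" using d1 degP by auto
      finally have "degree (bivar_const al * v + bivar_const be * u + P * u * v) = degree (P * u * v)"
        by (rule degree_add_eq_right)
      moreover have "degree (bivar_const lam :: 'a poly poly) = 0" by (simp add: bivar_const_def)
      ultimately show False using key d1 degP by simp
    qed
    have alnz: "al \<noteq> 0" and benz: "be \<noteq> 0" using albe by auto
    have unitc: "is_unit (bivar_const t :: 'a poly poly)" if "t \<noteq> 0" for t
    proof -
      have "bivar_const t * bivar_const (1/t) = (1 :: 'a poly poly)"
        using that by (simp add: bc_mult[symmetric] bc_one)
      thus ?thesis by (metis dvdI)
    qed
    show "is_unit g \<or> is_unit h"
      using \<open>u = 0 \<or> v = 0\<close> u v unitc alnz benz by auto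
  qed
qed

end
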